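(* Assume (A1) and (A2), and let $\{\gamma_n\}_{n\ge1}$ be any deterministic $[0,1)$-valued sequence. Then there exists a constant $p\in(0,1]$, depending only on $d,\gamma_1,\inf_{\mathsf X^2}q,\sup_{\mathsf X}\pi$ and $\min_i\theta_\star(i)$ (in particular not on $k$), such that for every $k\ge0$ with $\mathbb P(T_k<\infty)=1$, almost surely, $$\forall m\in\mathbb N,\qquad \mathbb P\big(A_m\,\big|\,\mathcal F_{T_k+md}\big)\ge p.$$ (One can take $p=\frac{1-\gamma_1}{1+\gamma_1}\big(c\,\min_i\theta_\star(i)\big)^d$ with $c=\inf_{\mathsf X^2}q/\sup_{\mathsf X}\pi$.)
   Context: Setting: $(\mathsf X,\mathcal X)$ Polish space with Borel $\sigma$-algebra and $\sigma$-finite reference measure $\lambda$; $\pi$ a probability density w.r.t. $\lambda$; $d\ge2$; $\mathsf X_1,\dots,\mathsf X_d$ a measurable partition of $\mathsf X$; $I(x)=i$ iff $x\in\mathsf X_i$; $\theta_\star(i)=\int_{\mathsf X_i}\pi\,d\lambda$; $\Theta=\{\theta\in(0,1)^d:\sum_i\theta(i)=1\}$; $\pi_\theta(x)=\big(\sum_{i}\theta_\star(i)/\theta(i)\big)^{-1}\sum_{i}\frac{\pi(x)}{\theta(i)}\mathbf 1_{\mathsf X_i}(x)$. (A1): $0<\inf\pi\le\sup\pi<\infty$ and $\min_i\theta_\star(i)>0$. (A2): $P_\theta$ is the Metropolis–Hastings kernel with target $\pi_\theta\,d\lambda$ and symmetric proposal density $q$ w.r.t. $\lambda$ with $\inf_{\mathsf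 X^2}q>0$. Linearized Wang–Landau algorithm: $X_0\in\mathsf X$, $\theta_0\in\Theta$; $X_{n+1}\sim P_{\theta_n}(X_n,\cdot)$ conditionally on $\mathcal F_n=\sigma(\theta_0,X_0,\dots,X_n)$; $\theta_{n+1}=\theta_n+\gamma_{n+1}H(X_{n+1},\theta_n)$ with $H_i(x,\theta)=\theta(i)(\mathbf 1_{\mathsf X_i}(x)-\theta(I(x)))$. Notation: $\underline\theta_n=\min_j\theta_n(j)$; $I_n=\min\{i:\theta_n(i)=\underline\theta_n\}$; $T_0=0$, $T_k=\inf\{n>T_{k-1}:X_n\in\mathsf X_{I_n}\}$. For fixed $k$ and $m\in\mathbb N$ (on $\{T_k<\infty\}$), let $((1)_m,\dots,(d)_m)$ be a permutation of $\{1,\dots,d\}$ (ties broken by smallest index) such that $\theta_{T_k+md}((1)_m)\le\dots\le\theta_{T_k+md}((d)_m)$; let $i_m=\max\{i\le d:\ \theta_{T_k+md}((i)_m)<\underline\theta_{T_k+md}(1+\gamma_1)/(1-\gamma_1)\}$ and $A_m=\{X_{T_k+md+1}\in\mathsf X_{(i_m)_m},\ X_{T_k+md+2}\in\mathsf X_{(i_m-1)_m},\dots,X_{T_k+md+i_m}\in\mathsf X_{(1)_m}\}$. *)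

theory Defs
  imports "HOL-Probability.Probability"
begin

text \<open>Indices of the partition are 1..d.  The label function I maps x to the index i with x in X_i.\<close>

definition theta_star :: "'a measure \<Rightarrow> ('a \<Rightarrow> real) \<Rightarrow> ('a \<Rightarrow> nat) \<Rightarrow> nat \<Rightarrow> real" where
  "theta_star lam \<pi> I i = (LINT x:{x \<in> space lam. I x = i}|lam. \<pi> x)"

definition Theta :: "nat \<Rightarrow> (nat \<Rightarrow> real) set" where
  "Theta d = {\<theta>. (\<forall>i\<in>{1..d}. 0 < \<theta> i \<and> \<theta> i < 1) \<and> (\<Sum>i=1..d. \<theta> i) = 1}"

definition pi_theta ::
  "nat \<Rightarrow> 'a measure \<Rightarrow> ('a \<Rightarrow> real) \<Rightarrow> ('a \<Rightarrow> nat) \<Rightarrow> (nat \<Rightarrow> real) \<Rightarrow> 'a \<Rightarrow> real" where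
  "pi_theta d lam \<pi> I \<theta> x =
     inverse (\<Sum>i=1..d. theta_star lam \<pi> I i / \<theta> i) * (\<Sum>i=1..d. \<pi> x / \<theta> i * indicator {y. I y = i} x)"

definition MH_kernel :: "'a measure \<Rightarrow> ('a \<Rightarrow> 'a \<Rightarrow> real) \<Rightarrow> ('a \<Rightarrow> real) \<Rightarrow> 'a \<Rightarrow> 'a set \<Rightarrow> real" where
  "MH_kernel lam q f x A =
     (LINT y:A|lam. q x y * min 1 (f y / f x))
     + indicator A x * (1 - (LINT y|lam. q x y * min 1 (f y / f x)))"

definition H_field :: "('a \<Rightarrow> nat) \<Rightarrow> 'a \<Rightarrow> (nat \<Rightarrow> real) \<Rightarrow> nat \<Rightarrow> real" where
  "H_field I x \<theta> i = \<theta> i * (indicator {y. I y = i} x - \<theta> (I x))"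

primrec wl_theta :: "(nat \<Rightarrow> real) \<Rightarrow> ('a \<Rightarrow> nat) \<Rightarrow> (nat \<Rightarrow> real) \<Rightarrow> (nat \<Rightarrow> 'a) \<Rightarrow> nat \<Rightarrow> nat \<Rightarrow> real" where
  "wl_theta \<gamma> I th0 xs 0 = th0"
| "wl_theta \<gamma> I th0 xs (Suc n) =
     (\<lambda>i. wl_theta \<gamma> I th0 xs n i + \<gamma> (Suc n) * H_field I (xs (Suc n)) (wl_theta \<gamma> I th0 xs n) i)"

definition theta_min :: "nat \<Rightarrow> (nat \<Rightarrow> real) \<Rightarrow> real" where
  "theta_min d \<theta> = Min (\<theta> ` {1..d})"

definition argmin_idx :: "nat \<Rightarrow> (nat \<Rightarrow> real) \<Rightarrow> nat" where
  "argmin_idx d \<theta> = (LEAST i. 1 \<le> i \<and> i \<le> d \<and> \<theta> i = theta_min d \<theta>)"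

primrec hit_time :: "nat \<Rightarrow> (nat \<Rightarrow> nat \<Rightarrow> real) \<Rightarrow> ('a \<Rightarrow> nat) \<Rightarrow> (nat \<Rightarrow> 'a) \<Rightarrow> nat \<Rightarrow> enat" where
  "hit_time d th I xs 0 = enat 0"
| "hit_time d th I xs (Suc k) =
     (case hit_time d th I xs k of
        \<infinity> \<Rightarrow> \<infinity>
      | enat t \<Rightarrow> (if \<exists>n>t. I (xs n) = argmin_idx d (th n)
                   then enat (LEAST n. t < n \<and> I (xs n) = argmin_idx d (th n))
                   else \<infinity>))"

text \<open>The ordering permutation: ord_idx d theta i = (i), for i in 1..d, sorting increasingly by theta,
  ties broken by smallest index (sort_key is stable).\<close>
definition ord_idx :: "nat \<Rightarrow> (nat \<Rightarrow> real) \<Rightarrow> nat \<Rightarrow> nat" where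
  "ord_idx d \<theta> i = sort_key \<theta> [1..<Suc d] ! (i - 1)"

text \<open>i_m = max{i <= d : theta((i)) < underline theta (1+g)/(1-g)}, with the convention i_m = 0 if
  this set is empty (then A_m is the sure event).\<close>
definition i_max :: "nat \<Rightarrow> real \<Rightarrow> (nat \<Rightarrow> real) \<Rightarrow> nat" where
  "i_max d g \<theta> = Max ({0} \<union> {i \<in> {1..d}. \<theta> (ord_idx d \<theta> i) < theta_min d \<theta> * (1 + g) / (1 - g)})"

text \<open>Natural filtration F_n = sigma(X_0, ..., X_n) (theta_0 is deterministic).\<close>
definition nat_filtration :: "'b measure \<Rightarrow> 'a measure \<Rightarrow> (nat \<Rightarrow> 'b \<Rightarrow> 'a) \<Rightarrow> nat \<Rightarrow> 'b measure" where
  "nat_filtration M N X n =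
     sigma (space M) (\<Union>j\<in>{..n}. {X j -` A \<inter> space M | A. A \<in> sets N})"

definition stopped_sigma :: "'b measure \<Rightarrow> (nat \<Rightarrow> 'b measure) \<Rightarrow> ('b \<Rightarrow> enat) \<Rightarrow> 'b measure" where
  "stopped_sigma M F \<tau> =
     sigma (space M) {A \<in> sets M. \<forall>n::nat. {\<omega> \<in> A. \<tau> \<omega> \<le> enat n} \<in> sets (F n)}"

end

theory Submission
  imports Defs
begin

primrec thl :: "(nat \<Rightarrow> real) \<Rightarrow> (nat \<Rightarrow> real) \<Rightarrow> (nat \<Rightarrow> nat) \<Rightarrow> nat \<Rightarrow> nat \<Rightarrow> real" where
  "thl \<gamma> th0 ls 0 = th0"
| "thl \<gamma> th0 ls (Suc n) = (\<lambda>i. thl \<gamma> th0 ls n i + \<gamma> (Suc n) * (thl \<gamma> th0 ls n i *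
      ((if ls (Suc n) = i then 1 else 0) - thl \<gamma> th0 ls n (ls (Suc n)))))"

lemma wl_thl: "wl_theta \<gamma> I th0 xs n = thl \<gamma> th0 (\<lambda>j. I (xs j)) n"
  by (induction n) (auto simp: H_field_def indicator_def fun_eq_iff)

lemma thl_local: "(\<And>j. j \<le> n \<Longrightarrow> ls j = ls' j) \<Longrightarrow> thl \<gamma> th0 ls n = thl \<gamma> th0 ls' n"
  by (induction n) auto

lemma theta_le1:
  assumes "\<forall>i\<in>{1..d}. 0 < (t::nat\<Rightarrow>real) i" "sum t {1..d} = 1" "i \<in> {1..d}"
  shows "t i \<le> 1"
proof -
  have "\<And>x. x \<in> {1..d} \<Longrightarrow> 0 \<le> t x" using assms(1) by (simp add: less_imp_le)
  then have "t i \<le> sum t {1..d}" using assms(3) by (intro member_le_sum) auto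
  then show ?thesis using assms(2) by simp
qed

lemma thl_pos:
  assumes th0: "th0 \<in> Theta d" and g: "\<forall>n\<ge>1. 0 \<le> \<gamma> n \<and> \<gamma> n < 1"
    and l: "\<forall>j. ls j \<in> {1..d}"
  shows "(\<forall>i\<in>{1..d}. 0 < thl \<gamma> th0 ls n i) \<and> (\<Sum>i=1..d. thl \<gamma> th0 ls n i) = 1"
proof (induction n)
  case 0
  then show ?case using th0 by (simp add: Theta_def)
next
  case (Suc n)
  let ?t = "thl \<gamma> th0 ls n" and ?g = "\<gamma> (Suc n)" and ?w = "ls (Suc n)"
  have pos: "\<forall>i\<in>{1..d}. 0 < ?t i" and s1: "(\<Sum>i=1..d. ?t i) = 1" using Suc by auto
  have w: "?w \<in> {1..d}" using l by auto
  have le1: "?t i \<le> 1" if "i \<in> {1..d}" for i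
    using theta_le1[OF pos s1 that] .
  have g0: "0 \<le> ?g" "?g < 1" using g by auto
  have "\<forall>i\<in>{1..d}. 0 < thl \<gamma> th0 ls (Suc n) i"
  proof
    fix i assume i: "i \<in> {1..d}"
    show "0 < thl \<gamma> th0 ls (Suc n) i"
    proof (cases "?w = i")
      case True
      have ti: "0 < ?t i" using pos i by blast
      have "0 \<le> ?g * (?t i * (1 - ?t i))" using g0 le1[OF i] ti by (intro mult_nonneg_nonneg) auto
      moreover have "thl \<gamma> th0 ls (Suc n) i = ?t i + ?g * (?t i * (1 - ?t i))" using True by simp
      ultimately show ?thesis using ti by linarith
    next
      case False
      have tw: "0 < ?t ?w" using pos w by blast
      have "?g * ?t ?w < 1 * ?t ?w" using g0 tw by (intro mult_strict_right_mono) auto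
      hence "?g * ?t ?w < 1" using le1[OF w] by linarith
      hence "0 < ?t i * (1 - ?g * ?t ?w)" using pos i by simp
      then show ?thesis using False by (simp add: algebra_simps)
    qed
  qed
  moreover have "(\<Sum>i=1..d. thl \<gamma> th0 ls (Suc n) i) = 1"
  proof -
    have e: "\<And>i. thl \<gamma> th0 ls (Suc n) i = ?t i + ?g * ((if ?w = i then ?t i else 0) - ?t ?w * ?t i)"
      by (simp add: algebra_simps)
    have "(\<Sum>i=1..d. thl \<gamma> th0 ls (Suc n) i) = (\<Sum>i=1..d. ?t i) + ?g * ((\<Sum>i=1..d. (if ?w = i then ?t i else 0)) - ?t ?w * (\<Sum>i=1..d. ?t i))"
      unfolding e sum.distrib sum_distrib_left[symmetric] sum_subtractf by simp
    also have "(\<Sum>i=1..d. (if ?w = i then ?t i else 0)) = ?t ?w" using w by (simp add: sum.delta)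
    finally show ?thesis using s1 by simp
  qed
  ultimately show ?case by blast
qed

lemma thl_order:
  assumes th0: "th0 \<in> Theta d" and g: "\<forall>n\<ge>1. 0 \<le> \<gamma> n \<and> \<gamma> n < 1"
    and l: "\<forall>j. ls j \<in> {1..d}" and u: "u \<in> {1..d}" and v: "v \<in> {1..d}"
    and le: "thl \<gamma> th0 ls n v \<le> thl \<gamma> th0 ls n u"
    and nv: "\<forall>k'\<in>{1..k}. ls (n + k') \<noteq> v"
  shows "thl \<gamma> th0 ls (n + k) v \<le> thl \<gamma> th0 ls (n + k) u"
  using nv
proof (induction k)
  case 0
  then show ?case using le by simp
next
  case (Suc k)
  let ?t = "thl \<gamma> th0 ls (n + k)" and ?g = "\<gamma> (Suc (n + k))" and ?w = "ls (Suc (n + k))"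
  have IH: "?t v \<le> ?t u" using Suc.IH Suc.prems by auto
  have "ls (n + Suc k) \<noteq> v" using Suc.prems by (auto dest: bspec[where x="Suc k"])
  hence wv: "?w \<noteq> v" by simp
  have P: "\<forall>i\<in>{1..d}. 0 < ?t i" and S: "(\<Sum>i=1..d. ?t i) = 1"
    using thl_pos[OF th0 g l, of "n+k"] by auto
  have w: "?w \<in> {1..d}" using l by auto
  have le1: "?t i \<le> 1" if "i \<in> {1..d}" for i
    using theta_le1[OF P S that] .
  have g0: "0 \<le> ?g" "?g < 1" using g by auto
  have tw: "0 < ?t ?w" using P w by blast
  have "?g * ?t ?w < 1 * ?t ?w" using g0 tw by (intro mult_strict_right_mono) auto
  hence a: "0 \<le> 1 - ?g * ?t ?w" using le1[OF w] by linarith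
  have tv: "thl \<gamma> th0 ls (n + Suc k) v = ?t v * (1 - ?g * ?t ?w)" using wv by (simp add: algebra_simps)
  show ?case
  proof (cases "?w = u")
    case True
    have e1: "thl \<gamma> th0 ls (n + Suc k) u = ?t u + ?g * (?t u * (1 - ?t u))" using True by simp
    have tu: "0 < ?t u" using P u by blast
    have e2: "0 \<le> ?g * (?t u * (1 - ?t u))" using g0 le1[OF u] tu by (intro mult_nonneg_nonneg) auto
    have e3: "0 \<le> ?g * ?t ?w" using g0 tw by simp
    have e4: "0 < ?t v" using P v by blast
    have e5: "?t v * (1 - ?g * ?t ?w) \<le> ?t v" using e3 e4
      by (simp add: mult_left_le)
    show ?thesis using tv IH e1 e2 e5 by linarith
  next
    case False
    have "thl \<gamma> th0 ls (n + Suc k) u = ?t u * (1 - ?g * ?t ?w)" using False by (simp add: algebra_simps)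
    then show ?thesis using tv IH a by (simp add: mult_right_mono)
  qed
qed


lemma ord_facts:
  shows "length (sort_key \<theta> [1..<Suc d]) = d" "set (sort_key \<theta> [1..<Suc d]) = {1..d}"
   "distinct (sort_key \<theta> [1..<Suc d])" "sorted (map \<theta> (sort_key (\<theta>::nat\<Rightarrow>real) [1..<Suc d]))"
  by (auto simp: length_sort sorted_sort_key)

lemma ord_range: "i \<in> {1..d} \<Longrightarrow> ord_idx d \<theta> i \<in> {1..d}"
proof -
  assume i: "i \<in> {1..d}"
  have "sort_key \<theta> [1..<Suc d] ! (i-1) \<in> set (sort_key \<theta> [1..<Suc d])"
    using i ord_facts(1)[of \<theta> d] by (intro nth_mem) auto
  then show ?thesis using ord_facts(2)[of \<theta> d] unfolding ord_idx_def by blast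
qed

lemma ord_inj: "i \<in> {1..d} \<Longrightarrow> j \<in> {1..d} \<Longrightarrow> ord_idx d \<theta> i = ord_idx d \<theta> j \<Longrightarrow> i = j"
proof -
  assume a: "i \<in> {1..d}" "j \<in> {1..d}" "ord_idx d \<theta> i = ord_idx d \<theta> j"
  have "i - 1 = j - 1"
    using nth_eq_iff_index_eq[OF ord_facts(3)[of \<theta> d], of "i-1" "j-1"] a ord_facts(1)[of \<theta> d]
    unfolding ord_idx_def by auto
  then show ?thesis using a by auto
qed

lemma ord_mono: "1 \<le> a \<Longrightarrow> a \<le> b \<Longrightarrow> b \<le> d \<Longrightarrow> \<theta> (ord_idx d \<theta> a) \<le> \<theta> (ord_idx d \<theta> b)"
proof -
  assume ab: "1 \<le> a" "a \<le> b" "b \<le> d"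
  have "map \<theta> (sort_key \<theta> [1..<Suc d]) ! (a-1) \<le> map \<theta> (sort_key \<theta> [1..<Suc d]) ! (b-1)"
    using ord_facts[of \<theta> d] ab by (intro sorted_nth_mono) auto
  then show ?thesis unfolding ord_idx_def using ord_facts(1)[of \<theta> d] ab by simp
qed

lemma i_max_le: "i_max d g \<theta> \<le> d"
  unfolding i_max_def by (subst Max_le_iff) auto

lemma i_max_mem:
  assumes "1 \<le> i_max d g \<theta>"
  shows "i_max d g \<theta> \<in> {1..d}"
    "\<theta> (ord_idx d \<theta> (i_max d g \<theta>)) < theta_min d \<theta> * (1 + g) / (1 - g)"
proof -
  let ?S = "{0} \<union> {i \<in> {1..d}. \<theta> (ord_idx d \<theta> i) < theta_min d \<theta> * (1 + g) / (1 - g)}"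
  have "Max ?S \<in> ?S" by (intro Max_in) auto
  then have "i_max d g \<theta> \<in> ?S" unfolding i_max_def .
  then show "i_max d g \<theta> \<in> {1..d}"
    "\<theta> (ord_idx d \<theta> (i_max d g \<theta>)) < theta_min d \<theta> * (1 + g) / (1 - g)"
    using assms by auto
qed

lemma theta_min_le: "i \<in> {1..d} \<Longrightarrow> theta_min d \<theta> \<le> \<theta> i"
  unfolding theta_min_def by (intro Min_le) auto

lemma theta_min_pos: "1 \<le> d \<Longrightarrow> \<forall>i\<in>{1..d}. 0 < \<theta> i \<Longrightarrow> 0 < theta_min d \<theta>"
  unfolding theta_min_def by (subst Min_gr_iff) auto


lemma set_integrable_of_integrable:
  fixes f :: "_ \<Rightarrow> real"
  shows "A \<in> sets M \<Longrightarrow> integrable M f \<Longrightarrow> set_integrable M A f"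
  unfolding set_integrable_def by (rule integrable_mult_indicator)

lemma pi_theta_eq:
  assumes I_range: "\<forall>x. I x \<in> {1..d}"
  shows "pi_theta d lam \<pi> I \<theta> y = inverse (\<Sum>i=1..d. theta_star lam \<pi> I i / \<theta> i) * (\<pi> y / \<theta> (I y))"
proof -
  have "(\<Sum>i=1..d. \<pi> y / \<theta> i * indicator {y. I y = i} y) = (\<Sum>i=1..d. if I y = i then \<pi> y / \<theta> i else 0)"
    by (intro sum.cong) (auto simp: indicator_def)
  also have "\<dots> = \<pi> y / \<theta> (I y)" using I_range by (simp add: sum.delta)
  finally show ?thesis unfolding pi_theta_def by simp
qed

lemma kernel_lb:
  fixes lam :: "'a measure" and \<pi> :: "'a \<Rightarrow> real"
  assumes sp: "space lam = UNIV"
    and pi_meas: "\<pi> \<in> borel_measurable lam" and pi_pos: "\<forall>x. 0 < \<pi> x"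
    and pi_le: "\<forall>x. \<pi> x \<le> Cp" and pi_int: "integrable lam \<pi>"
    and I_meas: "I \<in> measurable lam (count_space UNIV)" and I_range: "\<forall>x. I x \<in> {1..d}"
    and thst: "\<forall>i\<in>{1..d}. 0 < theta_star lam \<pi> I i"
    and q_int: "\<forall>x. integrable lam (q x)" and q_dens: "\<forall>x. (\<integral>y. q x y \<partial>lam) = 1"
    and q_lb: "\<forall>x y. cq \<le> q x y" and cq: "0 \<le> cq"
    and th: "\<forall>i\<in>{1..d}. 0 < \<theta> i" and i: "i \<in> {1..d}"
  shows "cq / Cp * theta_star lam \<pi> I i * min 1 (\<theta> (I x) / \<theta> i)
         \<le> MH_kernel lam q (pi_theta d lam \<pi> I \<theta>) x {y. I y = i}"
proof -
  define Z where "Z = (\<Sum>i=1..d. theta_star lam \<pi> I i / \<theta> i)"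
  have d1: "1 \<le> d" using i by auto
  have Zpos: "0 < Z" unfolding Z_def using thst th d1
    by (intro sum_pos) (auto simp: field_simps)
  define f where "f = pi_theta d lam \<pi> I \<theta>"
  have f_eq: "f y = inverse Z * (\<pi> y / \<theta> (I y))" for y
    unfolding f_def Z_def by (rule pi_theta_eq[OF I_range])
  have thI: "0 < \<theta> (I y)" for y using th I_range by auto
  have Cp: "0 < Cp" using pi_pos pi_le by (meson less_le_trans)
  have ratio: "f y / f x = (\<pi> y * \<theta> (I x)) / (\<pi> x * \<theta> (I y))" for y
    using Zpos thI[of x] thI[of y] pi_pos unfolding f_eq by (simp add: field_simps)
  have fpos: "0 < f y" for y unfolding f_eq using Zpos thI[of y] pi_pos by simp
  define g where "g y = q x y * min 1 (f y / f x)" for y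
  have q_meas: "q x \<in> borel_measurable lam" using q_int by auto
  have thI_meas: "(\<lambda>y. \<theta> (I y)) \<in> borel_measurable lam"
    using measurable_comp[OF I_meas, of \<theta> borel] by (simp add: comp_def)
  have f_meas: "f \<in> borel_measurable lam"
    unfolding f_eq[abs_def] using pi_meas thI_meas by measurable
  have g_meas: "g \<in> borel_measurable lam"
    unfolding g_def using q_meas f_meas by measurable
  have g_nn: "0 \<le> g y" for y
    unfolding g_def using q_lb cq fpos[of x] fpos[of y] by (intro mult_nonneg_nonneg) (auto intro: order_trans)
  have g_le: "g y \<le> q x y" for y
    unfolding g_def using q_lb cq by (intro mult_left_le) (auto intro: order_trans)
  have g_int: "integrable lam g"
    using g_nn g_le q_lb cq
  proof (intro Bochner_Integration.integrable_bound[OF q_int[rule_format, of x] g_meas] AE_I2)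
    fix y show "norm (g y) \<le> norm (q x y)" using g_nn[of y] g_le[of y] by simp
  qed
  have int_le: "(\<integral>y. g y \<partial>lam) \<le> 1"
    using integral_mono[OF g_int q_int[rule_format, of x] g_le] q_dens by simp
  define R where "R = {y. I y = i}"
  have R_sets: "R \<in> sets lam"
  proof -
    have "I -` {i} \<inter> space lam \<in> sets lam" using I_meas by (intro measurable_sets) auto
    then show ?thesis unfolding R_def using sp by (simp add: vimage_def)
  qed
  define K where "K = cq / Cp * min 1 (\<theta> (I x) / \<theta> i)"
  have pw: "K * \<pi> y \<le> g y" if "y \<in> R" for y
  proof -
    have Iy: "I y = i" using that unfolding R_def by simp
    define w where "w = \<theta> (I x) / \<theta> i"
    define v where "v = \<pi> y / Cp"
    have w0: "0 < w" unfolding w_def using thI[of x] th i by simp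
    have v0: "0 < v" "v \<le> 1" unfolding v_def using pi_pos pi_le Cp by auto
    have u: "f y / f x = (\<pi> y / \<pi> x) * w" unfolding ratio w_def using Iy by simp
    have "\<pi> y / Cp \<le> \<pi> y / \<pi> x" using pi_pos[rule_format, of y] pi_pos[rule_format, of x] pi_le Cp
      by (intro divide_left_mono) auto
    hence "v * w \<le> f y / f x" unfolding u v_def using w0 by (intro mult_right_mono) auto
    hence m1: "min 1 (v * w) \<le> min 1 (f y / f x)" by simp
    have vw: "v * w \<le> w" using v0 w0 by (simp add: mult_left_le_one_le)
    have m2: "v * min 1 w \<le> min 1 (v * w)"
    proof (cases "w \<le> 1")
      case True
      then show ?thesis using vw by (simp add: min_def)
    next
      case False
      have "v * 1 \<le> v * w" using False v0 by (intro mult_left_mono) auto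
      then show ?thesis using False v0 by (simp add: min_def)
    qed
    have "K * \<pi> y = cq * (v * min 1 w)" unfolding K_def v_def w_def using Cp by (simp add: field_simps)
    also have "\<dots> \<le> q x y * min 1 (f y / f x)"
    proof (intro mult_mono)
      show "v * min 1 w \<le> min 1 (f y / f x)" using m1 m2 by linarith
      show "cq \<le> q x y" using q_lb by blast
      show "0 \<le> q x y" using q_lb cq by (meson order_trans)
      show "0 \<le> v * min 1 w" using v0 w0 by simp
    qed
    finally show ?thesis unfolding g_def .
  qed
  have ts: "theta_star lam \<pi> I i = (LINT y:R|lam. \<pi> y)"
    unfolding theta_star_def R_def sp by simp
  have "cq / Cp * theta_star lam \<pi> I i * min 1 (\<theta> (I x) / \<theta> i) = (LINT y:R|lam. K * \<pi> y)"
    unfolding ts K_def by simp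
  also have "\<dots> \<le> (LINT y:R|lam. g y)"
    using set_integrable_of_integrable[OF R_sets pi_int] set_integrable_of_integrable[OF R_sets g_int] pw
    by (intro set_integral_mono) auto
  also have "\<dots> \<le> MH_kernel lam q f x R"
    unfolding MH_kernel_def g_def[symmetric] using int_le by (simp add: indicator_def)
  finally show ?thesis unfolding f_def R_def .
qed


definition local_pred :: "nat \<Rightarrow> ((nat \<Rightarrow> nat) \<Rightarrow> bool) \<Rightarrow> bool" where
  "local_pred n Q \<longleftrightarrow> (\<forall>ls ls'. (\<forall>j\<le>n. ls j = ls' j) \<longrightarrow> Q ls = Q ls')"

locale wl_setting =
  fixes lam :: "'a::topological_space measure" and \<pi> :: "'a \<Rightarrow> real" and I :: "'a \<Rightarrow> nat"
    and d :: nat and q :: "'a \<Rightarrow> 'a \<Rightarrow> real" and \<gamma> :: "nat \<Rightarrow> real"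
    and M :: "'b measure" and X :: "nat \<Rightarrow> 'b \<Rightarrow> 'a" and x0 :: 'a and th0 :: "nat \<Rightarrow> real"
  assumes lam_borel: "sets lam = sets borel"
    and d_ge: "2 \<le> d"
    and pi_meas: "\<pi> \<in> borel_measurable lam"
    and pi_int: "integrable lam \<pi>"
    and pi_prob: "(\<integral>x. \<pi> x \<partial>lam) = 1"
    and I_meas: "I \<in> measurable lam (count_space UNIV)"
    and I_range: "\<forall>x. I x \<in> {1..d}"
    and A1_inf: "\<exists>c>0. \<forall>x. c \<le> \<pi> x"
    and A1_sup: "\<exists>C. \<forall>x. \<pi> x \<le> C"
    and A1_theta: "0 < Min (theta_star lam \<pi> I ` {1..d})"
    and q_int: "\<forall>x. integrable lam (q x)"
    and q_dens: "\<forall>x. (\<integral>y. q x y \<partial>lam) = 1"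
    and A2_q: "\<exists>c>0. \<forall>x y. c \<le> q x y"
    and gamma_range: "\<forall>n\<ge>1. 0 \<le> \<gamma> n \<and> \<gamma> n < 1"
    and M_prob: "prob_space M"
    and X_meas: "\<forall>n. X n \<in> measurable M lam"
    and th0: "th0 \<in> Theta d"
    and dynamics: "\<forall>n. \<forall>A\<in>sets lam. AE \<omega> in M.
        real_cond_exp M (nat_filtration M lam X n) (\<lambda>\<omega>. indicator A (X (Suc n) \<omega>)) \<omega>
        = MH_kernel lam q (pi_theta d lam \<pi> I (wl_theta \<gamma> I th0 (\<lambda>j. X j \<omega>) n)) (X n \<omega>) A"
begin

abbreviation F where "F n \<equiv> nat_filtration M lam X n"

definition lab :: "'b \<Rightarrow> nat \<Rightarrow> nat" where "lab \<omega> j = I (X j \<omega>)"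

abbreviation th where "th \<omega> n \<equiv> thl \<gamma> th0 (lab \<omega>) n"

lemma sp: "space lam = UNIV"
  using sets_eq_imp_space_eq[OF lam_borel] by simp

lemma lab_range: "lab \<omega> j \<in> {1..d}"
  unfolding lab_def using I_range by simp

lemma wl_th: "wl_theta \<gamma> I th0 (\<lambda>j. X j \<omega>) n = th \<omega> n"
  unfolding wl_thl lab_def ..

definition G where "G n = (\<Union>j\<in>{..n}. {X j -` A \<inter> space M | A. A \<in> sets lam})"

lemma G_sub: "G n \<subseteq> sets M"
  unfolding G_def using X_meas by (auto intro: measurable_sets)

lemma G_Pow: "G n \<subseteq> Pow (space M)"
  unfolding G_def by auto

lemma F_space: "space (F n) = space M"
  unfolding nat_filtration_def G_def[symmetric] using G_Pow by simp

lemma F_sets: "sets (F n) = sigma_sets (space M) (G n)"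
  unfolding nat_filtration_def G_def[symmetric] using G_Pow by simp

lemma F_sub: "sets (F n) \<subseteq> sets M"
  unfolding F_sets using G_sub by (rule sets.sigma_sets_subset)

lemma F_mono: "n \<le> m \<Longrightarrow> sets (F n) \<subseteq> sets (F m)"
proof -
  assume "n \<le> m"
  then have "G n \<subseteq> G m" unfolding G_def by (intro UN_mono) auto
  then show ?thesis unfolding F_sets by (rule sigma_sets_subseteq)
qed

lemma subalg: "subalgebra M (F n)"
  unfolding subalgebra_def using F_space F_sub by auto

lemma sfs: "sigma_finite_subalgebra M (F n)"
proof -
  interpret prob_space M by (rule M_prob)
  interpret finite_measure_subalgebra M "F n"
    by unfold_locales (rule subalg)
  show ?thesis by unfold_locales
qed

lemma X_F: "j \<le> n \<Longrightarrow> X j \<in> measurable (F n) lam"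
proof (rule measurableI)
  fix x show "X j x \<in> space lam" using sp by simp
next
  fix A assume "j \<le> n" "A \<in> sets lam"
  then have "X j -` A \<inter> space M \<in> G n" unfolding G_def by blast
  then show "X j -` A \<inter> space (F n) \<in> sets (F n)" unfolding F_sets F_space by auto
qed

lemma lab_F: "j \<le> n \<Longrightarrow> (\<lambda>\<omega>. lab \<omega> j) \<in> measurable (F n) (count_space UNIV)"
  unfolding lab_def using measurable_comp[OF X_F I_meas] by (simp add: comp_def)

definition Lst where "Lst n \<omega> = map (lab \<omega>) [0..<Suc n]"

lemma Lst_len: "length (Lst n \<omega>) = Suc n"
  unfolding Lst_def by (simp only: length_map length_upt diff_zero)

lemma Lst_nth: "j < Suc n \<Longrightarrow> Lst n \<omega> ! j = lab \<omega> j"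
  unfolding Lst_def by (subst nth_map) (simp_all only: length_upt nth_upt, simp_all)

lemma Lst_meas: "Lst n \<in> measurable (F n) (count_space UNIV)"
proof (subst measurable_count_space_eq2_countable, intro conjI ballI)
  show "Lst n \<in> space (F n) \<rightarrow> UNIV" by simp
  fix ys :: "nat list"
  show "Lst n -` {ys} \<inter> space (F n) \<in> sets (F n)"
  proof (cases "length ys = Suc n")
    case True
    have "Lst n -` {ys} \<inter> space (F n) = (\<Inter>j\<in>{..<Suc n}. (\<lambda>\<omega>. lab \<omega> j) -` {ys ! j} \<inter> space (F n))"
    proof -
      have iff: "Lst n \<omega> = ys \<longleftrightarrow> (\<forall>j\<in>{..<Suc n}. lab \<omega> j = ys ! j)" for \<omega>
        unfolding list_eq_iff_nth_eq Lst_len True by (auto simp: Lst_nth)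
      show ?thesis by (rule set_eqI) (simp add: iff lessThan_empty_iff)
    qed
    also have "\<dots> \<in> sets (F n)"
      using lab_F by (intro sets.finite_INT) (auto intro!: measurable_sets)
    finally show ?thesis .
  next
    case False
    then have "Lst n -` {ys} \<inter> space (F n) = {}" using Lst_len by auto
    then show ?thesis by simp
  qed
qed

lemma local_sets:
  assumes "local_pred n Q"
  shows "{\<omega>\<in>space M. Q (lab \<omega>)} \<in> sets (F n)"
proof -
  define Q' where "Q' ys = Q (\<lambda>j. if j < length ys then ys ! j else 0)" for ys :: "nat list"
  have "Q (lab \<omega>) = Q' (Lst n \<omega>)" for \<omega>
  proof -
    have "\<forall>j\<le>n. lab \<omega> j = (\<lambda>j. if j < length (Lst n \<omega>) then Lst n \<omega> ! j else 0) j"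
    proof (intro allI impI)
      fix j assume "j \<le> n"
      then have "j < Suc n" by simp
      then show "lab \<omega> j = (\<lambda>j. if j < length (Lst n \<omega>) then Lst n \<omega> ! j else 0) j"
        by (simp add: Lst_len Lst_nth)
    qed
    then show ?thesis using assms[unfolded local_pred_def, rule_format, of "lab \<omega>" "(\<lambda>j. if j < length (Lst n \<omega>) then Lst n \<omega> ! j else 0)"]
      unfolding Q'_def by simp
  qed
  then have "{\<omega>\<in>space M. Q (lab \<omega>)} = Lst n -` {ys. Q' ys} \<inter> space (F n)"
    unfolding F_space by (simp add: set_eq_iff conj_commute)
  also have "\<dots> \<in> sets (F n)" using Lst_meas by (rule measurable_sets) simp
  finally show ?thesis .
qed

lemma local_sets_M: "local_pred n Q \<Longrightarrow> {\<omega>\<in>space M. Q (lab \<omega>)} \<in> sets M"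
  using local_sets F_sub by blast

end

lemma hit_cong: "hit_time d th I xs k = hit_time d th id (\<lambda>n. I (xs n)) k"
  by (induction k) (auto split: enat.splits)

definition hitl :: "(nat \<Rightarrow> real) \<Rightarrow> (nat \<Rightarrow> real) \<Rightarrow> nat \<Rightarrow> (nat \<Rightarrow> nat) \<Rightarrow> nat \<Rightarrow> enat" where
  "hitl \<gamma> th0 d ls k = hit_time d (thl \<gamma> th0 ls) id ls k"

lemma least_char:
  "((if \<exists>n>t'. P n then enat (LEAST n. t' < n \<and> P n) else \<infinity>) = enat t) \<longleftrightarrow>
   (t' < t \<and> P t \<and> (\<forall>n. t' < n \<and> n < t \<longrightarrow> \<not> P n))"
proof
  assume a: "(if \<exists>n>t'. P n then enat (LEAST n. t' < n \<and> P n) else \<infinity>) = enat t"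
  then have ex: "\<exists>n>t'. P n" by (auto split: if_splits)
  with a have t: "t = (LEAST n. t' < n \<and> P n)" by simp
  have "t' < t \<and> P t" unfolding t using ex by (metis (mono_tags, lifting) LeastI)
  moreover have "\<forall>n. t' < n \<and> n < t \<longrightarrow> \<not> P n" unfolding t using not_less_Least by blast
  ultimately show "t' < t \<and> P t \<and> (\<forall>n. t' < n \<and> n < t \<longrightarrow> \<not> P n)" by blast
next
  assume b: "t' < t \<and> P t \<and> (\<forall>n. t' < n \<and> n < t \<longrightarrow> \<not> P n)"
  then have ex: "\<exists>n>t'. P n" by blast
  have "(LEAST n. t' < n \<and> P n) = t"
    using b by (intro Least_equality) (auto simp: not_less[symmetric])
  then show "(if \<exists>n>t'. P n then enat (LEAST n. t' < n \<and> P n) else \<infinity>) = enat t" using ex by simp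
qed

lemma hitl_Suc:
  "hitl \<gamma> th0 d ls (Suc k) = enat t \<longleftrightarrow>
   (\<exists>t'. hitl \<gamma> th0 d ls k = enat t' \<and> t' < t \<and> ls t = argmin_idx d (thl \<gamma> th0 ls t) \<and>
      (\<forall>n. t' < n \<and> n < t \<longrightarrow> ls n \<noteq> argmin_idx d (thl \<gamma> th0 ls n)))"
proof (cases "hitl \<gamma> th0 d ls k")
  case (enat t')
  have e: "hitl \<gamma> th0 d ls (Suc k) = (if \<exists>n>t'. ls n = argmin_idx d (thl \<gamma> th0 ls n)
     then enat (LEAST n. t' < n \<and> ls n = argmin_idx d (thl \<gamma> th0 ls n)) else \<infinity>)"
    using enat unfolding hitl_def by simp
  show ?thesis unfolding e by (subst least_char) (use enat in simp)
next
  case infinity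
  then show ?thesis unfolding hitl_def by simp
qed

lemma hitl_local:
  "(\<And>j. j \<le> t \<Longrightarrow> ls j = ls' j) \<Longrightarrow> (hitl \<gamma> th0 d ls k = enat t \<longleftrightarrow> hitl \<gamma> th0 d ls' k = enat t)"
proof (induction k arbitrary: t)
  case 0
  then show ?case by (simp add: hitl_def)
next
  case (Suc k)
  have P: "(ls n = argmin_idx d (thl \<gamma> th0 ls n)) = (ls' n = argmin_idx d (thl \<gamma> th0 ls' n))"
    if "n \<le> t" for n
  proof -
    have "thl \<gamma> th0 ls n = thl \<gamma> th0 ls' n" using Suc.prems that by (intro thl_local) auto
    then show ?thesis using Suc.prems that by simp
  qed
  have H: "hitl \<gamma> th0 d ls k = enat t' \<longleftrightarrow> hitl \<gamma> th0 d ls' k = enat t'" if "t' < t" for t'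
    using Suc.IH[of t'] Suc.prems that by auto
  show ?case unfolding hitl_Suc
  proof
    assume "\<exists>t'. hitl \<gamma> th0 d ls k = enat t' \<and> t' < t \<and> ls t = argmin_idx d (thl \<gamma> th0 ls t) \<and>
      (\<forall>n. t' < n \<and> n < t \<longrightarrow> ls n \<noteq> argmin_idx d (thl \<gamma> th0 ls n))"
    then obtain t' where "hitl \<gamma> th0 d ls k = enat t'" "t' < t" "ls t = argmin_idx d (thl \<gamma> th0 ls t)"
      "\<forall>n. t' < n \<and> n < t \<longrightarrow> ls n \<noteq> argmin_idx d (thl \<gamma> th0 ls n)" by blast
    then show "\<exists>t'. hitl \<gamma> th0 d ls' k = enat t' \<and> t' < t \<and> ls' t = argmin_idx d (thl \<gamma> th0 ls' t) \<and>
      (\<forall>n. t' < n \<and> n < t \<longrightarrow> ls' n \<noteq> argmin_idx d (thl \<gamma> th0 ls' n))"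
      using H P by (intro exI[of _ t']) auto
  next
    assume "\<exists>t'. hitl \<gamma> th0 d ls' k = enat t' \<and> t' < t \<and> ls' t = argmin_idx d (thl \<gamma> th0 ls' t) \<and>
      (\<forall>n. t' < n \<and> n < t \<longrightarrow> ls' n \<noteq> argmin_idx d (thl \<gamma> th0 ls' n))"
    then obtain t' where "hitl \<gamma> th0 d ls' k = enat t'" "t' < t" "ls' t = argmin_idx d (thl \<gamma> th0 ls' t)"
      "\<forall>n. t' < n \<and> n < t \<longrightarrow> ls' n \<noteq> argmin_idx d (thl \<gamma> th0 ls' n)" by blast
    then show "\<exists>t'. hitl \<gamma> th0 d ls k = enat t' \<and> t' < t \<and> ls t = argmin_idx d (thl \<gamma> th0 ls t) \<and>
      (\<forall>n. t' < n \<and> n < t \<longrightarrow> ls n \<noteq> argmin_idx d (thl \<gamma> th0 ls n))"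
      using H P by (intro exI[of _ t']) auto
  qed
qed

lemma local_pred_mono: "local_pred a Q \<Longrightarrow> a \<le> b \<Longrightarrow> local_pred b Q"
  unfolding local_pred_def by auto

lemma local_pred_hit: "local_pred t (\<lambda>ls. hitl \<gamma> th0 d ls k = enat t)"
  unfolding local_pred_def using hitl_local by blast

context wl_setting
begin

lemma T_eq: "hit_time d (wl_theta \<gamma> I th0 (\<lambda>j. X j \<omega>)) I (\<lambda>j. X j \<omega>) k = hitl \<gamma> th0 d (lab \<omega>) k"
proof -
  have "wl_theta \<gamma> I th0 (\<lambda>j. X j \<omega>) = thl \<gamma> th0 (lab \<omega>)" using wl_th by (intro ext) simp
  then show ?thesis unfolding hitl_def by (subst hit_cong) (simp add: lab_def[abs_def])
qed

definition tau where "tau k m \<omega> = hitl \<gamma> th0 d (lab \<omega>) k + enat (m * d)"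

lemma tau_eq_iff: "tau k m \<omega> = enat n \<longleftrightarrow> m * d \<le> n \<and> hitl \<gamma> th0 d (lab \<omega>) k = enat (n - m * d)"
  unfolding tau_def by (cases "hitl \<gamma> th0 d (lab \<omega>) k") auto

lemma tau_sets: "{\<omega>\<in>space M. tau k m \<omega> = enat n} \<in> sets (F n)"
proof -
  have "local_pred n (\<lambda>ls. m * d \<le> n \<and> hitl \<gamma> th0 d ls k = enat (n - m * d))"
    using local_pred_mono[OF local_pred_hit[of "n - m*d" \<gamma> th0 d k], of n] unfolding local_pred_def by auto
  from local_sets[OF this] show ?thesis unfolding tau_eq_iff .
qed

lemma stopped_space: "space (stopped_sigma M F \<tau>) = space M"
  unfolding stopped_sigma_def by (subst space_measure_of) (auto dest: sets.sets_into_space)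

lemma stopped_sets: "sets (stopped_sigma M F \<tau>) = sigma_sets (space M) {A \<in> sets M. \<forall>n::nat. {\<omega> \<in> A. \<tau> \<omega> \<le> enat n} \<in> sets (F n)}"
  unfolding stopped_sigma_def by (subst sets_measure_of) (auto dest: sets.sets_into_space)

lemma stopped_subalg: "subalgebra M (stopped_sigma M F \<tau>)"
  unfolding subalgebra_def stopped_space stopped_sets
  by (auto intro!: sets.sigma_sets_subset)

lemma stopped_sfs: "sigma_finite_subalgebra M (stopped_sigma M F \<tau>)"
proof -
  interpret prob_space M by (rule M_prob)
  interpret finite_measure_subalgebra M "stopped_sigma M F \<tau>"
    by unfold_locales (rule stopped_subalg)
  show ?thesis by unfold_locales
qed

lemma stopped_slice:
  assumes st: "\<And>n. {\<omega>\<in>space M. \<tau> \<omega> = enat n} \<in> sets (F n)"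
    and A: "A \<in> sets (stopped_sigma M F \<tau>)"
  shows "{\<omega>\<in>A. \<tau> \<omega> = enat n} \<in> sets (F n)"
proof -
  let ?C = "{A \<in> sets M. \<forall>n::nat. {\<omega> \<in> A. \<tau> \<omega> \<le> enat n} \<in> sets (F n)}"
  have "A \<in> sigma_sets (space M) ?C" using A unfolding stopped_sets .
  then show ?thesis
  proof (induction arbitrary: n)
    case (Basic a)
    then have le: "\<And>n. {\<omega> \<in> a. \<tau> \<omega> \<le> enat n} \<in> sets (F n)" by blast
    show ?case
    proof (cases n)
      case 0
      have "{\<omega>\<in>a. \<tau> \<omega> = enat n} = {\<omega> \<in> a. \<tau> \<omega> \<le> enat 0}" using 0 by (auto simp: enat_0_iff zero_enat_def[symmetric])
      then show ?thesis using le[of 0] 0 by simp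
    next
      case (Suc n')
      have "{\<omega>\<in>a. \<tau> \<omega> = enat n} = {\<omega> \<in> a. \<tau> \<omega> \<le> enat n} - {\<omega> \<in> a. \<tau> \<omega> \<le> enat n'}"
        using Suc by (auto simp: le_less) (metis Suc_ile_eq enat_ord_simps(2) eSuc_enat ileI1 less_antisym antisym_conv2 enat_iless enat_ord_code(1) le_less_Suc_eq not_less_eq_eq)
      moreover have "{\<omega> \<in> a. \<tau> \<omega> \<le> enat n'} \<in> sets (F n)"
        using le[of n'] F_mono[of n' n] Suc by auto
      ultimately show ?thesis using le[of n] by auto
    qed
  next
    case Empty
    then show ?case by simp
  next
    case (Compl a)
    have "{\<omega>\<in>space M - a. \<tau> \<omega> = enat n} = {\<omega>\<in>space M. \<tau> \<omega> = enat n} - {\<omega>\<in>a. \<tau> \<omega> = enat n}"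
      by auto
    then show ?case using st[of n] Compl.IH[of n] by auto
  next
    case (Union a)
    have "{\<omega>\<in>\<Union>i. a i. \<tau> \<omega> = enat n} = (\<Union>i. {\<omega>\<in>a i. \<tau> \<omega> = enat n})" by auto
    then show ?case using Union.IH by auto
  qed
qed

end

context wl_setting
begin

lemma R_sets: "{y. I y = v} \<in> sets lam"
proof -
  have "I -` {v} \<inter> space lam \<in> sets lam" using I_meas by (intro measurable_sets) auto
  then show ?thesis using sp by (simp add: vimage_def)
qed

lemma lab_sets: "{\<omega>\<in>space M. lab \<omega> j = v} \<in> sets M"
proof -
  have "(\<lambda>\<omega>. lab \<omega> j) \<in> measurable M (count_space UNIV)"
    unfolding lab_def using measurable_comp[OF X_meas[rule_format, of j] I_meas] by (simp add: comp_def)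
  then have "(\<lambda>\<omega>. lab \<omega> j) -` {v} \<inter> space M \<in> sets M" by (intro measurable_sets) auto
  then show ?thesis by (simp add: vimage_def Collect_conj_eq Int_commute)
qed

lemma one_step:
  assumes H: "H \<in> sets (F s)" and v: "v \<in> {1..d}"
    and bnd: "\<forall>\<omega>\<in>H. a \<le> MH_kernel lam q (pi_theta d lam \<pi> I (th \<omega> s)) (X s \<omega>) {y. I y = v}"
  shows "a * measure M H \<le> measure M (H \<inter> {\<omega>\<in>space M. lab \<omega> (Suc s) = v})"
proof -
  interpret prob_space M by (rule M_prob)
  interpret sigma_finite_subalgebra M "F s" by (rule sfs)
  define R where "R = {y. I y = v}"
  have R: "R \<in> sets lam" unfolding R_def by (rule R_sets)
  define f :: "'b \<Rightarrow> real" where "f \<omega> = indicator R (X (Suc s) \<omega>)" for \<omega>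
  have HM: "H \<in> sets M" using H F_sub by blast
  have f_meas: "f \<in> borel_measurable M"
    unfolding f_def using X_meas[rule_format, of "Suc s"] R by measurable
  have f_int: "integrable M f"
    by (rule integrable_const_bound[where B=1]) (auto simp: f_def f_meas indicator_def)
  define Y where "Y = {\<omega>\<in>space M. lab \<omega> (Suc s) = v}"
  have Y: "Y \<in> sets M" unfolding Y_def by (rule lab_sets)
  have "(LINT \<omega>:H|M. f \<omega>) = (LINT \<omega>|M. indicator (H \<inter> Y) \<omega>)"
    unfolding set_lebesgue_integral_def
    by (rule Bochner_Integration.integral_cong) (auto simp: f_def Y_def R_def lab_def indicator_def)
  also have "\<dots> = measure M (H \<inter> Y)" using HM Y by (simp add: Int_absorb2 sets.sets_into_space Int_assoc)
  finally have e1: "measure M (H \<inter> Y) = (LINT \<omega>:H|M. f \<omega>)" by simp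
  have e2: "(LINT \<omega>:H|M. f \<omega>) = (LINT \<omega>:H|M. real_cond_exp M (F s) f \<omega>)"
    by (rule real_cond_exp_intA[OF f_int H])
  have AE1: "AE \<omega> in M. real_cond_exp M (F s) f \<omega> = MH_kernel lam q (pi_theta d lam \<pi> I (th \<omega> s)) (X s \<omega>) R"
    using dynamics[rule_format, OF R, of s] unfolding f_def wl_th by simp
  have AE2: "AE \<omega>\<in>H in M. a \<le> real_cond_exp M (F s) f \<omega>"
    using AE1 bnd unfolding R_def by auto
  have "(LINT \<omega>:H|M. a) \<le> (LINT \<omega>:H|M. real_cond_exp M (F s) f \<omega>)"
  proof (rule set_integral_mono_AE[OF _ _ AE2])
    show "set_integrable M H (\<lambda>\<omega>. a)" using HM by (simp add: set_integrable_def integrable_indicator_iff less_top[symmetric])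
    show "set_integrable M H (real_cond_exp M (F s) f)"
      using set_integrable_of_integrable[OF HM real_cond_exp_int(1)[OF f_int]] .
  qed
  moreover have "(LINT \<omega>:H|M. a) = a * measure M H"
    using HM by (simp add: set_integral_const)
  ultimately show ?thesis using e1 e2 unfolding Y_def by simp
qed

end

context wl_setting
begin

lemma one_step_tgt:
  assumes H: "H \<in> sets (F s)" and tgt_sets: "\<And>v. {\<omega>\<in>space M. tgt \<omega> = v} \<in> sets (F s)"
    and bnd: "\<forall>\<omega>\<in>H. tgt \<omega> \<in> {1..d} \<and>
       a \<le> MH_kernel lam q (pi_theta d lam \<pi> I (th \<omega> s)) (X s \<omega>) {y. I y = tgt \<omega>}"
  shows "a * measure M H \<le> measure M (H \<inter> {\<omega>\<in>space M. lab \<omega> (Suc s) = tgt \<omega>})"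
proof -
  interpret prob_space M by (rule M_prob)
  define Hv where "Hv v = H \<inter> {\<omega>\<in>space M. tgt \<omega> = v}" for v
  have Hv_F: "Hv v \<in> sets (F s)" for v unfolding Hv_def using H tgt_sets by auto
  have Hv_M: "Hv v \<in> sets M" for v using Hv_F F_sub by blast
  define Yv where "Yv v = Hv v \<inter> {\<omega>\<in>space M. lab \<omega> (Suc s) = v}" for v
  have Yv_M: "Yv v \<in> sets M" for v unfolding Yv_def using Hv_M lab_sets by auto
  have HM: "H \<in> sets M" using H F_sub by blast
  have Hsp: "H \<subseteq> space M" using HM sets.sets_into_space by blast
  have H_eq: "H = (\<Union>v\<in>{1..d}. Hv v)" unfolding Hv_def using bnd Hsp by auto
  have HY_eq: "H \<inter> {\<omega>\<in>space M. lab \<omega> (Suc s) = tgt \<omega>} = (\<Union>v\<in>{1..d}. Yv v)"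
    unfolding Yv_def Hv_def using bnd Hsp by auto
  have dj1: "disjoint_family_on Hv {1..d}" unfolding disjoint_family_on_def Hv_def by auto
  have dj2: "disjoint_family_on Yv {1..d}" unfolding disjoint_family_on_def Yv_def Hv_def by auto
  have m1: "measure M H = (\<Sum>v\<in>{1..d}. measure M (Hv v))"
    by (subst H_eq, rule finite_measure_finite_Union) (use Hv_M dj1 in auto)
  have m2: "measure M (H \<inter> {\<omega>\<in>space M. lab \<omega> (Suc s) = tgt \<omega>}) = (\<Sum>v\<in>{1..d}. measure M (Yv v))"
    by (subst HY_eq, rule finite_measure_finite_Union) (use Yv_M dj2 in auto)
  have each: "a * measure M (Hv v) \<le> measure M (Yv v)" if v: "v \<in> {1..d}" for v
    unfolding Yv_def
  proof (rule one_step[OF Hv_F v])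
    show "\<forall>\<omega>\<in>Hv v. a \<le> MH_kernel lam q (pi_theta d lam \<pi> I (th \<omega> s)) (X s \<omega>) {y. I y = v}"
      using bnd unfolding Hv_def by auto
  qed
  have "a * measure M H = (\<Sum>v\<in>{1..d}. a * measure M (Hv v))" unfolding m1 by (simp add: sum_distrib_left)
  also have "\<dots> \<le> (\<Sum>v\<in>{1..d}. measure M (Yv v))" by (intro sum_mono each)
  finally show ?thesis unfolding m2 .
qed

end

context wl_setting
begin

definition cq where "cq = Inf (range (case_prod q))"
definition Cp where "Cp = Sup (range \<pi>)"
definition tsm where "tsm = Min (theta_star lam \<pi> I ` {1..d})"
definition cst where "cst = cq / Cp"
definition bb where "bb = cst * tsm"
definition rho where "rho = (1 - \<gamma> 1) / (1 + \<gamma> 1)"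

lemma d1: "1 \<le> d" using d_ge by simp

lemma pi_pos: "0 < \<pi> x"
  using A1_inf by (meson less_le_trans)

lemma pi_le: "\<pi> x \<le> Cp"
  unfolding Cp_def using A1_sup by (intro cSup_upper) (auto simp: bdd_above_def)

lemma Cp_pos: "0 < Cp" using pi_pos pi_le by (meson less_le_trans)

lemma q_ge: "cq \<le> q x y"
proof -
  have "bdd_below (range (case_prod q))" using A2_q unfolding bdd_below_def by force
  then have "Inf (range (case_prod q)) \<le> case_prod q (x, y)" by (intro cInf_lower) auto
  then show ?thesis unfolding cq_def by simp
qed

lemma cq_pos: "0 < cq"
proof -
  obtain c where c: "c > 0" "\<forall>x y. c \<le> q x y" using A2_q by blast
  have "c \<le> Inf (range (case_prod q))" using c by (intro cInf_greatest) auto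
  then show ?thesis unfolding cq_def using c by simp
qed

lemma tsm_le: "i \<in> {1..d} \<Longrightarrow> tsm \<le> theta_star lam \<pi> I i"
  unfolding tsm_def by (intro Min_le) auto

lemma tsm_pos: "0 < tsm" unfolding tsm_def using A1_theta .

lemma thst_pos: "i \<in> {1..d} \<Longrightarrow> 0 < theta_star lam \<pi> I i"
  using tsm_le tsm_pos by (meson less_le_trans)

lemma thst_le1: "theta_star lam \<pi> I i \<le> 1"
proof -
  have "theta_star lam \<pi> I i = (LINT x|lam. indicator {x \<in> space lam. I x = i} x * \<pi> x)"
    unfolding theta_star_def set_lebesgue_integral_def by simp
  also have "\<dots> \<le> (LINT x|lam. \<pi> x)"
  proof (rule integral_mono)
    have "{x \<in> space lam. I x = i} \<in> sets lam" using R_sets[of i] sp by simp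
    then show "integrable lam (\<lambda>x. indicator {x \<in> space lam. I x = i} x * \<pi> x)"
      using integrable_mult_indicator[OF _ pi_int] by simp
    show "integrable lam \<pi>" by (rule pi_int)
    fix x show "indicator {x \<in> space lam. I x = i} x * \<pi> x \<le> \<pi> x"
      using pi_pos[of x] by (simp add: indicator_def)
  qed
  finally show ?thesis using pi_prob by simp
qed

lemma cq_le_Cp: "cq \<le> Cp"
proof (rule ccontr)
  assume "\<not> cq \<le> Cp"
  then have lt: "Cp < cq" by simp
  define h where "h y = q x0 y - \<pi> y" for y
  have h_pos: "0 < h y" for y unfolding h_def using q_ge[of x0 y] pi_le[of y] lt by linarith
  have h_int: "integrable lam h" unfolding h_def using q_int pi_int by auto
  have "integral\<^sup>L lam h = 0" unfolding h_def using q_int pi_int q_dens pi_prob by simp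
  then have "AE y in lam. h y = 0"
    using integral_nonneg_eq_0_iff_AE[OF h_int] h_pos by (simp add: less_imp_le)
  then have "AE y in lam. False" using h_pos by (auto elim: AE_mp simp: less_le)
  then have "AE y in lam. \<pi> y = 0" by auto
  then have "integral\<^sup>L lam \<pi> = 0" by (rule integral_eq_zero_AE)
  then show False using pi_prob by simp
qed

lemma cst_pos: "0 < cst" unfolding cst_def using cq_pos Cp_pos by simp
lemma cst_le1: "cst \<le> 1" unfolding cst_def using cq_le_Cp Cp_pos by simp
lemma bb_pos: "0 < bb" unfolding bb_def using cst_pos tsm_pos by simp
lemma bb_le1: "bb \<le> 1"
proof -
  have "tsm \<le> 1" using tsm_le[of 1] thst_le1[of 1] d1 by auto
  then show ?thesis unfolding bb_def using cst_pos cst_le1 tsm_pos by (simp add: mult_le_one)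
qed
lemma g1: "0 \<le> \<gamma> 1" "\<gamma> 1 < 1" using gamma_range by auto
lemma rho_pos: "0 < rho" unfolding rho_def using g1 by simp
lemma rho_le1: "rho \<le> 1" unfolding rho_def using g1 by simp

lemma th_pos: "\<forall>i\<in>{1..d}. 0 < th \<omega> n i"
  using thl_pos[OF th0 gamma_range, of "lab \<omega>" n] lab_range by auto

lemma kernel_inst:
  assumes i: "i \<in> {1..d}"
  shows "cst * theta_star lam \<pi> I i * min 1 (th \<omega> s (I x) / th \<omega> s i)
         \<le> MH_kernel lam q (pi_theta d lam \<pi> I (th \<omega> s)) x {y. I y = i}"
  unfolding cst_def
  by (rule kernel_lb[OF sp pi_meas _ _ pi_int I_meas I_range _ q_int q_dens _ _ _ i])
     (use pi_pos pi_le thst_pos q_ge cq_pos th_pos in \<open>auto simp: less_imp_le\<close>)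

end

context wl_setting
begin

lemma cancel_aux: "(a::real) \<noteq> 0 \<Longrightarrow> b \<noteq> 0 \<Longrightarrow> (a/b) * (c*b/a) = c"
  by (simp add: field_simps)

definition im where "im n \<omega> = i_max d (\<gamma> 1) (th \<omega> n)"
definition ordn where "ordn n \<omega> = ord_idx d (th \<omega> n)"
definition Ev where "Ev n r = {\<omega>\<in>space M. \<forall>j\<in>{1..r}. j \<le> im n \<omega> \<longrightarrow> lab \<omega> (n+j) = ordn n \<omega> (im n \<omega> - j + 1)}"

lemma local_th: "local_pred n' (\<lambda>ls. P (thl \<gamma> th0 ls n)) " if "n \<le> n'" for P
  unfolding local_pred_def using that by (auto intro!: arg_cong[where f=P] thl_local)

lemma Ev_F: "Ev n r \<in> sets (F (n + r))"
proof -
  have "local_pred (n + r) (\<lambda>ls. \<forall>j\<in>{1..r}. j \<le> i_max d (\<gamma> 1) (thl \<gamma> th0 ls n) \<longrightarrow>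
      ls (n+j) = ord_idx d (thl \<gamma> th0 ls n) (i_max d (\<gamma> 1) (thl \<gamma> th0 ls n) - j + 1))"
    unfolding local_pred_def
  proof (intro allI impI)
    fix ls ls' :: "nat \<Rightarrow> nat" assume a: "\<forall>j\<le>n + r. ls j = ls' j"
    then have "thl \<gamma> th0 ls n = thl \<gamma> th0 ls' n" by (intro thl_local) auto
    moreover have "\<forall>j\<in>{1..r}. ls (n+j) = ls' (n+j)" using a by auto
    ultimately show "(\<forall>j\<in>{1..r}. j \<le> i_max d (\<gamma> 1) (thl \<gamma> th0 ls n) \<longrightarrow>
      ls (n+j) = ord_idx d (thl \<gamma> th0 ls n) (i_max d (\<gamma> 1) (thl \<gamma> th0 ls n) - j + 1)) =
      (\<forall>j\<in>{1..r}. j \<le> i_max d (\<gamma> 1) (thl \<gamma> th0 ls' n) \<longrightarrow>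
      ls' (n+j) = ord_idx d (thl \<gamma> th0 ls' n) (i_max d (\<gamma> 1) (thl \<gamma> th0 ls' n) - j + 1))"
      by simp
  qed
  from local_sets[OF this] show ?thesis unfolding Ev_def im_def ordn_def .
qed

lemma th_sets: "{\<omega>\<in>space M. P (th \<omega> n)} \<in> sets (F n')" if "n \<le> n'" for P
  using local_sets[OF local_th[OF that, of P]] .

lemma ratio_bound:
  assumes E: "\<omega> \<in> Ev n r" and D: "Suc r \<le> im n \<omega>"
  shows "(if r = 0 then rho else 1) \<le> min 1 (th \<omega> (n+r) (lab \<omega> (n+r)) / th \<omega> (n+r) (ordn n \<omega> (im n \<omega> - r)))"
proof -
  define i where "i = im n \<omega>"
  have i1: "i \<in> {1..d}" using i_max_mem(1)[of d "\<gamma> 1" "th \<omega> n"] D unfolding i_def im_def by auto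
  have tgt: "ordn n \<omega> (i - r) \<in> {1..d}" unfolding ordn_def using i1 D i_def by (intro ord_range) auto
  show ?thesis
  proof (cases "r = 0")
    case True
    let ?t = "th \<omega> n"
    let ?v = "ordn n \<omega> i"
    have lt: "?t ?v < theta_min d ?t * (1 + \<gamma> 1) / (1 - \<gamma> 1)"
      using i_max_mem(2)[of d "\<gamma> 1" ?t] D unfolding i_def im_def ordn_def by auto
    have mn: "theta_min d ?t \<le> ?t (lab \<omega> n)" using lab_range by (intro theta_min_le) auto
    have vpos: "0 < ?t ?v" using th_pos tgt True by simp
    have "rho * ?t ?v \<le> theta_min d ?t"
    proof -
      have "rho * ?t ?v \<le> rho * (theta_min d ?t * (1 + \<gamma> 1) / (1 - \<gamma> 1))"
        using lt rho_pos by (intro mult_left_mono) auto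
      also have "\<dots> = theta_min d ?t" unfolding rho_def using g1 by (intro cancel_aux) auto
      finally show ?thesis .
    qed
    then have "rho \<le> ?t (lab \<omega> n) / ?t ?v" using mn vpos by (simp add: pos_le_divide_eq)
    then show ?thesis using True rho_le1 unfolding i_def by simp
  next
    case False
    let ?u = "ordn n \<omega> (i - r + 1)" and ?v = "ordn n \<omega> (i - r)"
    have Eall: "\<forall>j\<in>{1..r}. j \<le> i \<longrightarrow> lab \<omega> (n+j) = ordn n \<omega> (i - j + 1)"
      using E unfolding Ev_def i_def mem_Collect_eq by (elim conjE)
    have u_eq: "lab \<omega> (n + r) = ?u"
    proof -
      have r1: "r \<in> {1..r}" and r2: "r \<le> i" using False D i_def by auto
      show ?thesis using Eall[rule_format, OF r1 r2] by simp
    qed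
    have u: "?u \<in> {1..d}" unfolding ordn_def using i1 D i_def False by (intro ord_range) auto
    have v: "?v \<in> {1..d}" using tgt .
    have le0: "th \<omega> n ?v \<le> th \<omega> n ?u"
      unfolding ordn_def using i1 D i_def False by (intro ord_mono) auto
    have nv: "\<forall>k'\<in>{1..r}. lab \<omega> (n + k') \<noteq> ?v"
    proof
      fix k' assume k': "k' \<in> {1..r}"
      have kl: "k' \<le> i" using k' D unfolding i_def by simp
      have lk: "lab \<omega> (n + k') = ordn n \<omega> (i - k' + 1)" using Eall[rule_format, OF k' kl] .
      have r1: "i - k' + 1 \<in> {1..d}" using k' kl i1 by auto
      have r2: "i - r \<in> {1..d}" using D i1 unfolding i_def by auto
      have ne: "i - k' + 1 \<noteq> i - r" using k' D unfolding i_def by auto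
      have "ordn n \<omega> (i - k' + 1) \<noteq> ?v" unfolding ordn_def using ord_inj[OF r1 r2] ne by blast
      then show "lab \<omega> (n + k') \<noteq> ?v" using lk by simp
    qed
    have "th \<omega> (n+r) ?v \<le> th \<omega> (n+r) ?u"
      by (rule thl_order[OF th0 gamma_range _ u v le0 nv]) (use lab_range in auto)
    moreover have "0 < th \<omega> (n+r) ?v" using th_pos v by auto
    ultimately have "1 \<le> th \<omega> (n+r) (lab \<omega> (n+r)) / th \<omega> (n+r) ?v" unfolding u_eq by simp
    then show ?thesis using False unfolding i_def by simp
  qed
qed

definition ar where "ar r = (if r = 0 then rho * bb else bb)"

lemma ar_pos: "0 < ar r" unfolding ar_def using rho_pos bb_pos by simp
lemma ar_le1: "ar r \<le> 1" unfolding ar_def using rho_pos rho_le1 bb_pos bb_le1 by (simp add: mult_le_one)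

lemma chain_step:
  assumes H: "H \<in> sets (F n)"
  shows "ar r * measure M (H \<inter> Ev n r) \<le> measure M (H \<inter> Ev n (Suc r))"
proof -
  interpret prob_space M by (rule M_prob)
  define s where "s = n + r"
  define Hr where "Hr = H \<inter> Ev n r"
  have Hr: "Hr \<in> sets (F s)" unfolding Hr_def s_def using H F_mono[of n "n+r"] Ev_F by auto
  define D where "D = {\<omega>\<in>space M. Suc r \<le> i_max d (\<gamma> 1) (th \<omega> n)}"
  have D: "D \<in> sets (F s)" unfolding D_def s_def by (rule th_sets) simp
  define tgt where "tgt \<omega> = ordn n \<omega> (im n \<omega> - r)" for \<omega>
  have tgt_sets: "{\<omega>\<in>space M. tgt \<omega> = v} \<in> sets (F s)" for v
    unfolding tgt_def ordn_def im_def s_def by (rule th_sets[of n _ "\<lambda>t. ord_idx d t (i_max d (\<gamma> 1) t - r) = v"]) simp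
  have HrD: "Hr \<inter> D \<in> sets (F s)" using Hr D by auto
  have bnd: "\<forall>\<omega>\<in>Hr \<inter> D. tgt \<omega> \<in> {1..d} \<and>
       ar r \<le> MH_kernel lam q (pi_theta d lam \<pi> I (th \<omega> s)) (X s \<omega>) {y. I y = tgt \<omega>}"
  proof
    fix \<omega> assume w: "\<omega> \<in> Hr \<inter> D"
    then have E: "\<omega> \<in> Ev n r" and Dw: "Suc r \<le> im n \<omega>" unfolding Hr_def D_def im_def by auto
    have i1: "im n \<omega> \<in> {1..d}" using i_max_mem(1)[of d "\<gamma> 1" "th \<omega> n"] Dw unfolding im_def by auto
    have tg: "tgt \<omega> \<in> {1..d}" unfolding tgt_def ordn_def using i1 Dw by (intro ord_range) auto
    have rb: "(if r = 0 then rho else 1) \<le> min 1 (th \<omega> s (lab \<omega> s) / th \<omega> s (tgt \<omega>))"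
      using ratio_bound[OF E Dw] unfolding s_def tgt_def .
    have "ar r = cst * tsm * (if r = 0 then rho else 1)" unfolding ar_def bb_def by simp
    also have "\<dots> \<le> cst * theta_star lam \<pi> I (tgt \<omega>) * min 1 (th \<omega> s (lab \<omega> s) / th \<omega> s (tgt \<omega>))"
      using cst_pos tsm_le[OF tg] tsm_pos rb rho_pos
      by (intro mult_mono) auto
    also have "\<dots> \<le> MH_kernel lam q (pi_theta d lam \<pi> I (th \<omega> s)) (X s \<omega>) {y. I y = tgt \<omega>}"
      using kernel_inst[OF tg, of \<omega> s "X s \<omega>"] unfolding lab_def .
    finally show "tgt \<omega> \<in> {1..d} \<and> ar r \<le> MH_kernel lam q (pi_theta d lam \<pi> I (th \<omega> s)) (X s \<omega>) {y. I y = tgt \<omega>}"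
      using tg by simp
  qed
  have os: "ar r * measure M (Hr \<inter> D) \<le> measure M (Hr \<inter> D \<inter> {\<omega>\<in>space M. lab \<omega> (Suc s) = tgt \<omega>})"
    by (rule one_step_tgt[OF HrD tgt_sets bnd])
  have HrM: "Hr \<in> sets M" using Hr F_sub by blast
  have DM: "D \<in> sets M" using D F_sub by blast
  have YM: "Hr \<inter> D \<inter> {\<omega>\<in>space M. lab \<omega> (Suc s) = tgt \<omega>} \<in> sets M"
  proof -
    have "{\<omega>\<in>space M. tgt \<omega> = v} \<in> sets M" for v using tgt_sets F_sub by blast
    then have "{\<omega>\<in>space M. lab \<omega> (Suc s) = tgt \<omega>} = (\<Union>v. {\<omega>\<in>space M. tgt \<omega> = v} \<inter> {\<omega>\<in>space M. lab \<omega> (Suc s) = v})"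
      by auto
    moreover have "{\<omega>\<in>space M. tgt \<omega> = v} \<inter> {\<omega>\<in>space M. lab \<omega> (Suc s) = v} \<in> sets M" for v
      using tgt_sets[of v] F_sub[of s] lab_sets[of "Suc s" v] by (meson sets.Int subsetD)
    then have "(\<Union>v. {\<omega>\<in>space M. tgt \<omega> = v} \<inter> {\<omega>\<in>space M. lab \<omega> (Suc s) = v}) \<in> sets M"
      by (intro sets.countable_UN) auto
    ultimately show ?thesis using HrM DM by auto
  qed
  have iff: "\<omega> \<in> Ev n (Suc r) \<longleftrightarrow> \<omega> \<in> Ev n r \<and> (Suc r \<le> im n \<omega> \<longrightarrow> lab \<omega> (Suc s) = tgt \<omega>)" for \<omega>
  proof -
    define Q where "Q j = (j \<le> im n \<omega> \<longrightarrow> lab \<omega> (n+j) = ordn n \<omega> (im n \<omega> - j + 1))" for j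
    have EQ: "\<omega> \<in> Ev n k \<longleftrightarrow> \<omega> \<in> space M \<and> (\<forall>j\<in>{1..k}. Q j)" for k unfolding Ev_def Q_def by simp
    have A: "(\<forall>j\<in>{1..Suc r}. Q j) \<longleftrightarrow> (\<forall>j\<in>{1..r}. Q j) \<and> Q (Suc r)"
      by (simp add: atLeastAtMostSuc_conv conj_commute)
    have B: "Q (Suc r) \<longleftrightarrow> (Suc r \<le> im n \<omega> \<longrightarrow> lab \<omega> (Suc s) = tgt \<omega>)"
    proof (cases "Suc r \<le> im n \<omega>")
      case True
      then have "im n \<omega> - Suc r + 1 = im n \<omega> - r" by simp
      then show ?thesis unfolding Q_def tgt_def s_def using True by simp
    qed (simp add: Q_def)
    show ?thesis unfolding EQ using A B by blast
  qed
  have eq: "H \<inter> Ev n (Suc r) = (Hr \<inter> D \<inter> {\<omega>\<in>space M. lab \<omega> (Suc s) = tgt \<omega>}) \<union> (Hr - D)"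
  proof -
    have "Hr \<subseteq> space M" using HrM sets.sets_into_space by blast
    then show ?thesis unfolding Hr_def D_def im_def[symmetric] using iff by blast
  qed
  have m1: "measure M (H \<inter> Ev n (Suc r)) = measure M (Hr \<inter> D \<inter> {\<omega>\<in>space M. lab \<omega> (Suc s) = tgt \<omega>}) + measure M (Hr - D)"
    unfolding eq using YM HrM DM by (intro finite_measure_Union) auto
  have m2: "measure M Hr = measure M (Hr \<inter> D) + measure M (Hr - D)"
  proof -
    have "Hr = (Hr \<inter> D) \<union> (Hr - D)" by blast
    then have "measure M Hr = measure M ((Hr \<inter> D) \<union> (Hr - D))" by simp
    also have "\<dots> = measure M (Hr \<inter> D) + measure M (Hr - D)"
      using HrM DM by (intro finite_measure_Union) auto
    finally show ?thesis .
  qed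
  have m3: "ar r * measure M (Hr - D) \<le> measure M (Hr - D)"
    using ar_le1[of r] ar_pos[of r] by (intro mult_left_le_one_le) auto
  have m4: "ar r * measure M Hr = ar r * measure M (Hr \<inter> D) + ar r * measure M (Hr - D)"
    unfolding m2 by (simp add: distrib_left)
  have "ar r * measure M Hr \<le> measure M (H \<inter> Ev n (Suc r))"
    using m1 m3 m4 os by linarith
  then show ?thesis unfolding Hr_def .
qed

definition Bc where "Bc r = (if r = 0 then 1 else rho * bb ^ r)"

lemma Ev0: "Ev n 0 = space M" unfolding Ev_def by auto

lemma chain:
  assumes H: "H \<in> sets (F n)"
  shows "Bc r * measure M H \<le> measure M (H \<inter> Ev n r)"
proof (induction r)
  case 0
  have "H \<subseteq> space M" using H F_sub sets.sets_into_space by blast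
  then show ?case unfolding Bc_def Ev0 by (simp add: Int_absorb2)
next
  case (Suc r)
  have "Bc (Suc r) = ar r * Bc r" unfolding Bc_def ar_def by auto
  then have "Bc (Suc r) * measure M H = ar r * (Bc r * measure M H)" by simp
  also have "\<dots> \<le> ar r * measure M (H \<inter> Ev n r)" using Suc ar_pos[of r] by (intro mult_left_mono) (auto simp: less_imp_le)
  also have "\<dots> \<le> measure M (H \<inter> Ev n (Suc r))" by (rule chain_step[OF H])
  finally show ?case .
qed

end

lemma cond_exp_ge_from_sets:
  assumes sfs: "sigma_finite_subalgebra M Fs" and P: "prob_space M" and A: "A \<in> sets M"
    and ineq: "\<And>G. G \<in> sets Fs \<Longrightarrow> p * measure M G \<le> measure M (G \<inter> A)"
  shows "AE \<omega> in M. p \<le> real_cond_exp M Fs (indicator A) \<omega>"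
proof -
  interpret prob_space M by (rule P)
  interpret sigma_finite_subalgebra M Fs by (rule sfs)
  define g where "g = real_cond_exp M Fs (indicator A)"
  have f_int: "integrable M (indicator A :: 'a \<Rightarrow> real)" using A by (simp add: integrable_indicator_iff less_top[symmetric])
  have g_int: "integrable M g" unfolding g_def by (rule real_cond_exp_int(1)[OF f_int])
  have spF: "space Fs = space M" using subalg unfolding subalgebra_def by simp
  define S where "S = {\<omega>\<in>space M. g \<omega> < p}"
  have SF: "S \<in> sets Fs"
  proof -
    have "g \<in> borel_measurable Fs" unfolding g_def by simp
    then have "{\<omega>\<in>space Fs. g \<omega> < p} \<in> sets Fs" by measurable
    then show ?thesis unfolding S_def spF .
  qed
  have SM: "S \<in> sets M" using SF subalg unfolding subalgebra_def by blast
  have e1: "(LINT \<omega>:S|M. indicator A \<omega>) = (LINT \<omega>:S|M. g \<omega>)"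
    unfolding g_def by (rule real_cond_exp_intA[OF f_int SF])
  have e2: "(LINT \<omega>:S|M. (indicator A \<omega> :: real)) = measure M (S \<inter> A)"
  proof -
    have "(LINT \<omega>:S|M. (indicator A \<omega> :: real)) = (LINT \<omega>|M. indicator (S \<inter> A) \<omega>)"
      unfolding set_lebesgue_integral_def
      by (rule Bochner_Integration.integral_cong) (auto simp: indicator_def)
    also have "\<dots> = measure M (S \<inter> A)" using SM A by (simp add: Int_absorb2 sets.sets_into_space Int_assoc)
    finally show ?thesis .
  qed
  define h where "h \<omega> = indicator S \<omega> * (p - g \<omega>)" for \<omega>
  have h_nn: "0 \<le> h \<omega>" for \<omega> unfolding h_def S_def by (auto simp: indicator_def)
  have i1: "integrable M (\<lambda>\<omega>. indicator S \<omega> * p)"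
  proof -
    have "integrable M (\<lambda>\<omega>. indicator S \<omega> *\<^sub>R p)" using SM by (intro integrable_mult_indicator) auto
    then show ?thesis by simp
  qed
  have i2: "integrable M (\<lambda>\<omega>. indicator S \<omega> * g \<omega>)"
  proof -
    have "integrable M (\<lambda>\<omega>. indicator S \<omega> *\<^sub>R g \<omega>)" using SM g_int by (intro integrable_mult_indicator) auto
    then show ?thesis by simp
  qed
  have h_eq: "h = (\<lambda>\<omega>. indicator S \<omega> * p - indicator S \<omega> * g \<omega>)"
    unfolding h_def by (simp add: right_diff_distrib)
  have h_int: "integrable M h" unfolding h_eq using i1 i2 by auto
  have "integral\<^sup>L M h = (LINT \<omega>|M. indicator S \<omega> * p) - (LINT \<omega>|M. indicator S \<omega> * g \<omega>)"
    unfolding h_eq by (rule Bochner_Integration.integral_diff[OF i1 i2])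
  also have "(LINT \<omega>|M. indicator S \<omega> * p) = p * measure M S"
    using SM by (simp add: mult.commute)
  also have "(LINT \<omega>|M. indicator S \<omega> * g \<omega>) = (LINT \<omega>:S|M. g \<omega>)"
    unfolding set_lebesgue_integral_def by simp
  finally have "integral\<^sup>L M h = p * measure M S - measure M (S \<inter> A)" using e1 e2 by simp
  also have "\<dots> \<le> 0" using ineq[OF SF] by simp
  finally have "integral\<^sup>L M h \<le> 0" .
  moreover have "0 \<le> integral\<^sup>L M h" using h_nn by simp
  ultimately have "integral\<^sup>L M h = 0" by simp
  then have "AE \<omega> in M. h \<omega> = 0" using integral_nonneg_eq_0_iff_AE[OF h_int] h_nn by simp
  then show ?thesis
  proof (rule AE_mp, intro AE_I2 impI)
    fix \<omega> assume w: "\<omega> \<in> space M" and h0: "h \<omega> = 0"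
    show "p \<le> real_cond_exp M Fs (indicator A) \<omega>"
    proof (rule ccontr)
      assume "\<not> p \<le> real_cond_exp M Fs (indicator A) \<omega>"
      then have "\<omega> \<in> S" "g \<omega> < p" unfolding S_def g_def using w by auto
      then have "0 < h \<omega>" unfolding h_def by simp
      then show False using h0 by simp
    qed
  qed
qed


context wl_setting
begin

definition p0 where "p0 = rho * bb ^ d"

definition Aset where "Aset k m = {\<omega>\<in>space M. \<exists>t. hitl \<gamma> th0 d (lab \<omega>) k = enat t \<and>
   (\<forall>j\<in>{1..i_max d (\<gamma> 1) (th \<omega> (t+m*d))}. lab \<omega> (t+m*d+j) = ord_idx d (th \<omega> (t+m*d)) (i_max d (\<gamma> 1) (th \<omega> (t+m*d)) - j + 1))}"

lemma Aset_sets: "Aset k m \<in> sets M"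
proof -
  define Q where "Q t ls = (hitl \<gamma> th0 d ls k = enat t \<and>
   (\<forall>j\<in>{1..i_max d (\<gamma> 1) (thl \<gamma> th0 ls (t+m*d))}. ls (t+m*d+j) = ord_idx d (thl \<gamma> th0 ls (t+m*d)) (i_max d (\<gamma> 1) (thl \<gamma> th0 ls (t+m*d)) - j + 1)))" for t ls
  have loc: "local_pred (t+m*d+d) (Q t)" for t
    unfolding local_pred_def
  proof (intro allI impI)
    fix ls ls' :: "nat \<Rightarrow> nat" assume a: "\<forall>j\<le>t + m*d + d. ls j = ls' j"
    have h: "hitl \<gamma> th0 d ls k = enat t \<longleftrightarrow> hitl \<gamma> th0 d ls' k = enat t"
      using a by (intro hitl_local) auto
    have th: "thl \<gamma> th0 ls (t+m*d) = thl \<gamma> th0 ls' (t+m*d)"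
      using a by (intro thl_local) auto
    have l: "ls (t+m*d+j) = ls' (t+m*d+j)" if "j \<in> {1..i_max d (\<gamma> 1) (thl \<gamma> th0 ls (t+m*d))}" for j
    proof -
      have "j \<le> d" using that i_max_le[of d "\<gamma> 1" "thl \<gamma> th0 ls (t+m*d)"] by auto
      then show ?thesis using a by auto
    qed
    show "Q t ls = Q t ls'" unfolding Q_def using h th l by auto
  qed
  have "Aset k m = (\<Union>t. {\<omega>\<in>space M. Q t (lab \<omega>)})" unfolding Aset_def Q_def by auto
  also have "\<dots> \<in> sets M" using local_sets_M[OF loc] by (intro sets.countable_UN) auto
  finally show ?thesis .
qed

lemma Bc_d: "Bc d = p0" unfolding Bc_def p0_def using d1 by simp

lemma main_ineq:
  assumes AE: "AE \<omega> in M. hitl \<gamma> th0 d (lab \<omega>) k \<noteq> \<infinity>"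
    and B: "B \<in> sets (stopped_sigma M F (tau k m))"
  shows "p0 * measure M B \<le> measure M (B \<inter> Aset k m)"
proof -
  interpret prob_space M by (rule M_prob)
  have GM: "B \<in> sets M" using B stopped_subalg unfolding subalgebra_def by blast
  have Gsp: "B \<subseteq> space M" using GM sets.sets_into_space by blast
  define Gn where "Gn n = {\<omega>\<in>B. tau k m \<omega> = enat n}" for n
  have GnF: "Gn n \<in> sets (F n)" for n unfolding Gn_def by (rule stopped_slice[OF tau_sets B])
  have GnM: "Gn n \<in> sets M" for n using GnF F_sub by blast
  define GE where "GE n = Gn n \<inter> Ev n d" for n
  have GEM: "GE n \<in> sets M" for n unfolding GE_def using GnM Ev_F F_sub by blast
  have sub: "GE n \<subseteq> B \<inter> Aset k m" for n
  proof
    fix \<omega> assume w: "\<omega> \<in> GE n"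
    then have wG: "\<omega> \<in> B" and tn: "tau k m \<omega> = enat n" and E: "\<omega> \<in> Ev n d"
      unfolding GE_def Gn_def by auto
    from tn have md: "m * d \<le> n" and ht: "hitl \<gamma> th0 d (lab \<omega>) k = enat (n - m*d)"
      unfolding tau_eq_iff by auto
    have tn2: "n - m*d + m*d = n" using md by simp
    have Eall: "\<forall>j\<in>{1..d}. j \<le> im n \<omega> \<longrightarrow> lab \<omega> (n+j) = ordn n \<omega> (im n \<omega> - j + 1)"
      using E unfolding Ev_def mem_Collect_eq by (elim conjE)
    have imd: "im n \<omega> \<le> d" unfolding im_def by (rule i_max_le)
    have "\<forall>j\<in>{1..i_max d (\<gamma> 1) (th \<omega> n)}. lab \<omega> (n+j) = ord_idx d (th \<omega> n) (i_max d (\<gamma> 1) (th \<omega> n) - j + 1)"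
    proof
      fix j assume j: "j \<in> {1..i_max d (\<gamma> 1) (th \<omega> n)}"
      then have j1: "j \<in> {1..d}" and j2: "j \<le> im n \<omega>" using imd unfolding im_def by auto
      show "lab \<omega> (n+j) = ord_idx d (th \<omega> n) (i_max d (\<gamma> 1) (th \<omega> n) - j + 1)"
        using Eall[rule_format, OF j1 j2] unfolding im_def ordn_def .
    qed
    then have "\<omega> \<in> Aset k m" unfolding Aset_def using ht tn2 wG Gsp by (intro CollectI conjI exI[of _ "n - m*d"]) auto
    then show "\<omega> \<in> B \<inter> Aset k m" using wG by simp
  qed
  have dGn: "disjoint_family Gn" unfolding disjoint_family_on_def Gn_def by auto
  have dGE: "disjoint_family GE" unfolding disjoint_family_on_def GE_def Gn_def by auto
  have s1: "(\<lambda>n. measure M (GE n)) sums measure M (\<Union>n. GE n)"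
    using GEM dGE by (intro finite_measure_UNION) auto
  have s2: "(\<lambda>n. measure M (Gn n)) sums measure M (\<Union>n. Gn n)"
    using GnM dGn by (intro finite_measure_UNION) auto
  have ch: "p0 * measure M (Gn n) \<le> measure M (GE n)" for n
    using chain[OF GnF, of d] unfolding Bc_d GE_def .
  have s3: "(\<lambda>n. p0 * measure M (Gn n)) sums (p0 * measure M (\<Union>n. Gn n))"
    using s2 by (rule sums_mult)
  have le1: "p0 * measure M (\<Union>n. Gn n) \<le> measure M (\<Union>n. GE n)"
    using sums_le[OF ch s3 s1] .
  have AM: "B \<inter> Aset k m \<in> sets M" using GM Aset_sets by auto
  have le2: "measure M (\<Union>n. GE n) \<le> measure M (B \<inter> Aset k m)"
    using sub AM by (intro finite_measure_mono) auto
  define N where "N = {\<omega>\<in>space M. hitl \<gamma> th0 d (lab \<omega>) k = \<infinity>}"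
  have NM: "N \<in> sets M"
  proof -
    have "N = space M - (\<Union>t. {\<omega>\<in>space M. hitl \<gamma> th0 d (lab \<omega>) k = enat t})"
      unfolding N_def by (auto simp: not_infinity_eq)
    also have "\<dots> \<in> sets M"
      using local_sets_M[OF local_pred_hit] by (intro sets.Diff sets.countable_UN) auto
    finally show ?thesis .
  qed
  have N0: "measure M N = 0"
  proof -
    have "emeasure M N = 0"
      using AE_iff_measurable[OF NM, of "\<lambda>\<omega>. hitl \<gamma> th0 d (lab \<omega>) k \<noteq> \<infinity>"] AE unfolding N_def by auto
    then show ?thesis by (simp add: measure_def)
  qed
  have UGM: "(\<Union>n. Gn n) \<in> sets M" using GnM by auto
  have "B \<subseteq> (\<Union>n. Gn n) \<union> N"
  proof
    fix \<omega> assume w: "\<omega> \<in> B"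
    show "\<omega> \<in> (\<Union>n. Gn n) \<union> N"
    proof (cases "hitl \<gamma> th0 d (lab \<omega>) k")
      case (enat t)
      then have "tau k m \<omega> = enat (t + m*d)" unfolding tau_def by simp
      then show ?thesis using w unfolding Gn_def by auto
    next
      case infinity
      then show ?thesis using w Gsp unfolding N_def by auto
    qed
  qed
  then have "measure M B \<le> measure M ((\<Union>n. Gn n) \<union> N)" using UGM NM by (intro finite_measure_mono) auto
  also have "\<dots> \<le> measure M (\<Union>n. Gn n) + measure M N" using UGM NM by (rule measure_Un_le)
  finally have "measure M B \<le> measure M (\<Union>n. Gn n)" using N0 by simp
  moreover have "measure M (\<Union>n. Gn n) \<le> measure M B" using GM unfolding Gn_def by (intro finite_measure_mono) auto
  ultimately have eqG: "measure M (\<Union>n. Gn n) = measure M B" by simp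
  show ?thesis using le1 le2 eqG by simp
qed

lemma main_AE:
  assumes AE: "AE \<omega> in M. hitl \<gamma> th0 d (lab \<omega>) k \<noteq> \<infinity>"
  shows "AE \<omega> in M. p0 \<le> real_cond_exp M (stopped_sigma M F (tau k m)) (indicator (Aset k m)) \<omega>"
  by (rule cond_exp_ge_from_sets[OF stopped_sfs M_prob Aset_sets main_ineq[OF AE]])

lemma p0_pos: "0 < p0" unfolding p0_def using rho_pos bb_pos by simp
lemma p0_le1: "p0 \<le> 1" unfolding p0_def using rho_pos rho_le1 bb_pos bb_le1 by (simp add: mult_le_one power_le_one)

end

theorem mainTheorem4:
  fixes lam :: "'a::polish_space measure" and \<pi> :: "'a \<Rightarrow> real" and I :: "'a \<Rightarrow> nat"
    and d :: nat and q :: "'a \<Rightarrow> 'a \<Rightarrow> real" and \<gamma> :: "nat \<Rightarrow> real"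
    and M :: "'b measure" and X :: "nat \<Rightarrow> 'b \<Rightarrow> 'a" and x0 :: 'a and th0 :: "nat \<Rightarrow> real"
  assumes lam_borel: "sets lam = sets borel"
    and lam_sfin: "sigma_finite_measure lam"
    and d_ge: "2 \<le> d"
    and pi_meas: "\<pi> \<in> borel_measurable lam"
    and pi_nonneg: "\<forall>x. 0 \<le> \<pi> x"
    and pi_int: "integrable lam \<pi>"
    and pi_prob: "(\<integral>x. \<pi> x \<partial>lam) = 1"
    and I_meas: "I \<in> measurable lam (count_space UNIV)"
    and I_range: "\<forall>x. I x \<in> {1..d}"
    and A1_inf: "\<exists>c>0. \<forall>x. c \<le> \<pi> x"
    and A1_sup: "\<exists>C. \<forall>x. \<pi> x \<le> C"
    and A1_theta: "0 < Min (theta_star lam \<pi> I ` {1..d})"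
    and q_meas: "(\<lambda>(x, y). q x y) \<in> borel_measurable (lam \<Otimes>\<^sub>M lam)"
    and q_sym: "\<forall>x y. q x y = q y x"
    and q_int: "\<forall>x. integrable lam (q x)"
    and q_dens: "\<forall>x. (\<integral>y. q x y \<partial>lam) = 1"
    and A2_q: "\<exists>c>0. \<forall>x y. c \<le> q x y"
    and gamma_range: "\<forall>n\<ge>1. 0 \<le> \<gamma> n \<and> \<gamma> n < 1"
    and M_prob: "prob_space M"
    and X_meas: "\<forall>n. X n \<in> measurable M lam"
    and X0: "\<forall>\<omega>\<in>space M. X 0 \<omega> = x0"
    and th0: "th0 \<in> Theta d"
    and dynamics: "\<forall>n. \<forall>A\<in>sets lam. AE \<omega> in M.
        real_cond_exp M (nat_filtration M lam X n) (\<lambda>\<omega>. indicator A (X (Suc n) \<omega>)) \<omega>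
        = MH_kernel lam q (pi_theta d lam \<pi> I (wl_theta \<gamma> I th0 (\<lambda>j. X j \<omega>) n)) (X n \<omega>) A"
  shows "let p = (1 - \<gamma> 1) / (1 + \<gamma> 1)
                 * ((Inf (range (case_prod q)) / Sup (range \<pi>)) * Min (theta_star lam \<pi> I ` {1..d})) ^ d;
             th = (\<lambda>\<omega>. wl_theta \<gamma> I th0 (\<lambda>j. X j \<omega>));
             T = (\<lambda>k \<omega>. hit_time d (th \<omega>) I (\<lambda>j. X j \<omega>) k);
             A = (\<lambda>k m. {\<omega> \<in> space M. \<exists>t. T k \<omega> = enat t \<and>
                    (\<forall>j\<in>{1..i_max d (\<gamma> 1) (th \<omega> (t + m * d))}.
                       I (X (t + m * d + j) \<omega>)
                       = ord_idx d (th \<omega> (t + m * d)) (i_max d (\<gamma> 1) (th \<omega> (t + m * d)) - j + 1))})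
         in 0 < p \<and> p \<le> 1 \<and>
            (\<forall>k. (AE \<omega> in M. T k \<omega> \<noteq> \<infinity>) \<longrightarrow>
               (AE \<omega> in M. \<forall>m::nat.
                  p \<le> real_cond_exp M (stopped_sigma M (nat_filtration M lam X) (\<lambda>\<omega>. T k \<omega> + enat (m * d)))
                         (indicator (A k m)) \<omega>))"
proof -
  interpret wl_setting lam \<pi> I d q \<gamma> M X x0 th0
    by (intro wl_setting.intro) (rule assms)+
  have p_eq: "(1 - \<gamma> 1) / (1 + \<gamma> 1)
                 * ((Inf (range (case_prod q)) / Sup (range \<pi>)) * Min (theta_star lam \<pi> I ` {1..d})) ^ d = p0"
    unfolding p0_def rho_def bb_def cst_def cq_def Cp_def tsm_def by simp
  have T_eq': "hit_time d (wl_theta \<gamma> I th0 (\<lambda>j. X j \<omega>)) I (\<lambda>j. X j \<omega>) k = hitl \<gamma> th0 d (lab \<omega>) k" for k \<omega>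
    by (rule T_eq)
  have th_eq: "wl_theta \<gamma> I th0 (\<lambda>j. X j \<omega>) = thl \<gamma> th0 (lab \<omega>)" for \<omega>
    using wl_th by (intro ext) simp
  have tau_eq: "(\<lambda>\<omega>. hit_time d (wl_theta \<gamma> I th0 (\<lambda>j. X j \<omega>)) I (\<lambda>j. X j \<omega>) k + enat (m * d)) = tau k m" for k m
    unfolding tau_def T_eq' ..
  have A_eq: "{\<omega> \<in> space M. \<exists>t. hit_time d (wl_theta \<gamma> I th0 (\<lambda>j. X j \<omega>)) I (\<lambda>j. X j \<omega>) k = enat t \<and>
                    (\<forall>j\<in>{1..i_max d (\<gamma> 1) (wl_theta \<gamma> I th0 (\<lambda>j. X j \<omega>) (t + m * d))}.
                       I (X (t + m * d + j) \<omega>)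
                       = ord_idx d (wl_theta \<gamma> I th0 (\<lambda>j. X j \<omega>) (t + m * d)) (i_max d (\<gamma> 1) (wl_theta \<gamma> I th0 (\<lambda>j. X j \<omega>) (t + m * d)) - j + 1))}
        = Aset k m" for k m
    unfolding Aset_def T_eq' unfolding th_eq by (simp add: lab_def)
  show ?thesis
    unfolding Let_def p_eq unfolding tau_eq A_eq unfolding T_eq'
    using p0_pos p0_le1 main_AE by (simp add: AE_all_countable)
qed


end
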